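(* Let $\Sigma$ be an alphabet. The transition systems labelled on $\Sigma$ are exactly the objects of the slice topos $\mathcal{G}/\Sigma$ which are separated for the double negation topology of $\mathcal{G}/\Sigma$.
   Context: $\mathcal{G}=\mathbf{Sets}^{\Gamma^{op}}$ is the topos of graphs ($\Gamma$ has objects $N,A$ and arrows $s,t:N\to A$; a graph has nodes, arcs and source/target maps, with parallel arcs and self-loops allowed; morphisms preserve source and target). For a set $\Sigma$, also denote by $\Sigma$ the graph with one node and arc set $\Sigma$. The slice topos $\mathcal{G}/\Sigma$ has as objects morphisms $g:G\to\Sigma$ (i.e., graphs whose arcs are labelled by elements of $\Sigma$) and as morphisms label-preserving graph morphisms. A transition system labelled on $\Sigma$ is an object $g:G\to\Sigma$ such that for every pair of nodes $x,y$ and every $\alpha\in\Sigma$ there is at most one arc from $x$ to $y$ labelled $\alpha$. The double negation topology of a topos is $\neg\neg:\Omega\to\Omega$, where $\neg$ is the classifying map of false $\perp:1\to\Omega$. An object $X$ is separated for a topology $j$ if for every object $Y$, every $j$-dense subobject $m:S\hookrightarrow Y$ (one whose closure, classified by $j\circ\chi_m$, is $Y$) and every $f:S\to X$ there is at most one $h:Y\to X$ with $h\circ m=f$. *)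

theory Defs
  imports Main
begin

text \<open>Objects of the slice topos G/Sigma: graphs (node set, arc set, source and
target maps) with arcs labelled in the alphabet Sigma.\<close>

record ('n, 'a, 's) lgraph =
  nodes :: "'n set"
  arcs  :: "'a set"
  src   :: "'a \<Rightarrow> 'n"
  tgt   :: "'a \<Rightarrow> 'n"
  lab   :: "'a \<Rightarrow> 's"

definition wf_lgraph :: "'s set \<Rightarrow> ('n, 'a, 's) lgraph \<Rightarrow> bool" where
  "wf_lgraph \<Sigma> G \<longleftrightarrow>
     (\<forall>e\<in>arcs G. src G e \<in> nodes G \<and> tgt G e \<in> nodes G \<and> lab G e \<in> \<Sigma>)"

text \<open>Morphisms of G/Sigma: label-preserving graph morphisms, given by a node map and an arc map
(only their values on the carriers matter).\<close>

definition lhom ::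
  "('n, 'a, 's) lgraph \<Rightarrow> ('m, 'b, 's) lgraph \<Rightarrow> ('n \<Rightarrow> 'm) \<Rightarrow> ('a \<Rightarrow> 'b) \<Rightarrow> bool" where
  "lhom G H fN fA \<longleftrightarrow>
     (\<forall>x\<in>nodes G. fN x \<in> nodes H) \<and>
     (\<forall>e\<in>arcs G. fA e \<in> arcs H \<and> src H (fA e) = fN (src G e) \<and>
                  tgt H (fA e) = fN (tgt G e) \<and> lab H (fA e) = lab G e)"

text \<open>Subobjects of Y in G/Sigma are subgraphs (with the inherited labelling),
given by a node set and an arc set closed under source and target.\<close>

definition subgraph :: "('n, 'a, 's) lgraph \<Rightarrow> 'n set \<times> 'a set \<Rightarrow> bool" where
  "subgraph Y S \<longleftrightarrow> fst S \<subseteq> nodes Y \<and> snd S \<subseteq> arcs Y \<and>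
     (\<forall>e\<in>snd S. src Y e \<in> fst S \<and> tgt Y e \<in> fst S)"

text \<open>Negation on subobjects (the operation classified by composing with the negation
map on Omega): the pseudo-complement, i.e. the largest subobject disjoint from S.\<close>

definition sub_neg :: "('n, 'a, 's) lgraph \<Rightarrow> 'n set \<times> 'a set \<Rightarrow> 'n set \<times> 'a set" where
  "sub_neg Y S =
    (\<Union>{fst T | T. subgraph Y T \<and> fst T \<inter> fst S = {} \<and> snd T \<inter> snd S = {}},
     \<Union>{snd T | T. subgraph Y T \<and> fst T \<inter> fst S = {} \<and> snd T \<inter> snd S = {}})"

definition nn_closure :: "('n, 'a, 's) lgraph \<Rightarrow> 'n set \<times> 'a set \<Rightarrow> 'n set \<times> 'a set" where
  "nn_closure Y S = sub_neg Y (sub_neg Y S)"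

definition nn_dense :: "('n, 'a, 's) lgraph \<Rightarrow> 'n set \<times> 'a set \<Rightarrow> bool" where
  "nn_dense Y S \<longleftrightarrow> subgraph Y S \<and> nn_closure Y S = (nodes Y, arcs Y)"

definition separated_against :: "('m, 'b, 's) lgraph \<Rightarrow> ('n, 'a, 's) lgraph \<Rightarrow> bool" where
  "separated_against Y X \<longleftrightarrow>
     (\<forall>S hN hA kN kA. nn_dense Y S \<longrightarrow> lhom Y X hN hA \<longrightarrow> lhom Y X kN kA \<longrightarrow>
        (\<forall>x\<in>fst S. hN x = kN x) \<longrightarrow> (\<forall>e\<in>snd S. hA e = kA e) \<longrightarrow>
        (\<forall>x\<in>nodes Y. hN x = kN x) \<and> (\<forall>e\<in>arcs Y. hA e = kA e))"

definition transition_system :: "('n, 'a, 's) lgraph \<Rightarrow> bool" where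
  "transition_system G \<longleftrightarrow>
     (\<forall>e1\<in>arcs G. \<forall>e2\<in>arcs G. src G e1 = src G e2 \<and> tgt G e1 = tgt G e2 \<and>
        lab G e1 = lab G e2 \<longrightarrow> e1 = e2)"

end

theory Submission
  imports Defs
begin

lemma dense_nodes:
  assumes "nn_dense Y S" "x \<in> nodes Y"
  shows "x \<in> fst S"
proof (rule ccontr)
  assume nx: "x \<notin> fst S"
  have sS: "subgraph Y S" using assms(1) by (simp add: nn_dense_def)
  have "subgraph Y ({x}, {})" using assms(2) by (simp add: subgraph_def)
  moreover have "{x} \<inter> fst S = {}" using nx by auto
  ultimately have "({x}, {}) \<in> {T. subgraph Y T \<and> fst T \<inter> fst S = {} \<and> snd T \<inter> snd S = {}}"
    by simp
  then have "x \<in> \<Union>{fst T | T. subgraph Y T \<and> fst T \<inter> fst S = {} \<and> snd T \<inter> snd S = {}}"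
    by (metis (mono_tags, lifting) UnionI fst_conv insertI1 mem_Collect_eq)
  then have xn: "x \<in> fst (sub_neg Y S)" by (simp add: sub_neg_def)
  have "x \<in> fst (nn_closure Y S)" using assms by (simp add: nn_dense_def)
  then obtain T where "subgraph Y T" "fst T \<inter> fst (sub_neg Y S) = {}" "x \<in> fst T"
    unfolding nn_closure_def sub_neg_def[of Y "sub_neg Y S"] by auto
  with xn show False by auto
qed

lemma sub_neg_sub: "subgraph Y (sub_neg Y S)"
proof -
  let ?P = "\<lambda>T. subgraph Y T \<and> fst T \<inter> fst S = {} \<and> snd T \<inter> snd S = {}"
  have 1: "fst (sub_neg Y S) = \<Union>{fst T | T. ?P T}" "snd (sub_neg Y S) = \<Union>{snd T | T. ?P T}"
    by (simp_all add: sub_neg_def)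
  have a: "fst (sub_neg Y S) \<subseteq> nodes Y"
  proof
    fix x assume "x \<in> fst (sub_neg Y S)"
    then obtain T where T: "?P T" "x \<in> fst T" unfolding 1 by blast
    then show "x \<in> nodes Y" unfolding subgraph_def by auto
  qed
  have b: "snd (sub_neg Y S) \<subseteq> arcs Y"
  proof
    fix x assume "x \<in> snd (sub_neg Y S)"
    then obtain T where T: "?P T" "x \<in> snd T" unfolding 1 by blast
    then show "x \<in> arcs Y" unfolding subgraph_def by auto
  qed
  have c: "\<forall>e\<in>snd (sub_neg Y S). src Y e \<in> fst (sub_neg Y S) \<and> tgt Y e \<in> fst (sub_neg Y S)"
  proof
    fix e assume "e \<in> snd (sub_neg Y S)"
    then obtain T where T: "?P T" "e \<in> snd T" unfolding 1 by blast
    have sg: "subgraph Y T" using T(1) by simp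
    then have "\<forall>e\<in>snd T. src Y e \<in> fst T \<and> tgt Y e \<in> fst T" by (simp add: subgraph_def)
    then have st: "src Y e \<in> fst T" "tgt Y e \<in> fst T" using T(2) by simp_all
    have "fst T \<subseteq> \<Union>{fst T | T. ?P T}" using T(1) by blast
    then show "src Y e \<in> fst (sub_neg Y S) \<and> tgt Y e \<in> fst (sub_neg Y S)" unfolding 1 using st by blast
  qed
  show ?thesis using a b c unfolding subgraph_def by simp
qed


lemma neg_full:
  assumes "fst S = nodes Y"
  shows "sub_neg Y S = ({}, {})"
proof -
  let ?P = "\<lambda>T. subgraph Y T \<and> fst T \<inter> fst S = {} \<and> snd T \<inter> snd S = {}"
  have e: "fst T = {} \<and> snd T = {}" if "?P T" for T
  proof -
    have sg: "subgraph Y T" and d: "fst T \<inter> nodes Y = {}" using that assms by simp_all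
    have "fst T \<subseteq> nodes Y" using sg by (simp add: subgraph_def)
    then have f: "fst T = {}" using d by blast
    have "\<forall>e\<in>snd T. src Y e \<in> fst T" using sg by (simp add: subgraph_def)
    then have "snd T = {}" using f by blast
    with f show ?thesis by simp
  qed
  have "\<Union>{fst T | T. ?P T} \<subseteq> {}"
  proof
    fix x assume "x \<in> \<Union>{fst T | T. ?P T}"
    then obtain T where T: "?P T" "x \<in> fst T" by blast
    then show "x \<in> {}" using e[OF T(1)] by simp
  qed
  then have fst0: "\<Union>{fst T | T. ?P T} = {}" by (simp only: subset_empty)
  have "\<Union>{snd T | T. ?P T} \<subseteq> {}"
  proof
    fix x assume "x \<in> \<Union>{snd T | T. ?P T}"
    then obtain T where T: "?P T" "x \<in> snd T" by blast
    then show "x \<in> {}" using e[OF T(1)] by simp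
  qed
  then have snd0: "\<Union>{snd T | T. ?P T} = {}" by (simp only: subset_empty)
  show ?thesis by (simp only: sub_neg_def fst0 snd0)
qed

lemma neg_empty:
  assumes "subgraph Y (nodes Y, arcs Y)" "fst S = {}" "snd S = {}"
  shows "sub_neg Y S = (nodes Y, arcs Y)"
proof -
  let ?P = "\<lambda>T. subgraph Y T \<and> fst T \<inter> fst S = {} \<and> snd T \<inter> snd S = {}"
  have e: "fst T \<subseteq> nodes Y \<and> snd T \<subseteq> arcs Y" if "?P T" for T
    using that by (simp add: subgraph_def)
  have p: "?P (nodes Y, arcs Y)" using assms by simp
  have fstA: "\<Union>{fst T | T. ?P T} = nodes Y"
  proof
    show "\<Union>{fst T | T. ?P T} \<subseteq> nodes Y"
    proof
      fix x assume "x \<in> \<Union>{fst T | T. ?P T}"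
      then obtain T where T: "?P T" "x \<in> fst T" by blast
      then show "x \<in> nodes Y" using e[OF T(1)] by blast
    qed
    show "nodes Y \<subseteq> \<Union>{fst T | T. ?P T}" using p
      by (metis (mono_tags, lifting) Union_upper fst_conv mem_Collect_eq)
  qed
  have sndA: "\<Union>{snd T | T. ?P T} = arcs Y"
  proof
    show "\<Union>{snd T | T. ?P T} \<subseteq> arcs Y"
    proof
      fix x assume "x \<in> \<Union>{snd T | T. ?P T}"
      then obtain T where T: "?P T" "x \<in> snd T" by blast
      then show "x \<in> arcs Y" using e[OF T(1)] by blast
    qed
    show "arcs Y \<subseteq> \<Union>{snd T | T. ?P T}" using p
      by (metis (mono_tags, lifting) Union_upper snd_conv mem_Collect_eq)
  qed
  show ?thesis by (simp only: sub_neg_def fstA sndA)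
qed

lemma fwd:
  fixes G :: "('n, 'a, 's) lgraph" and Y :: "('m, 'b, 's) lgraph"
  assumes "transition_system G"
  shows "separated_against Y G"
  unfolding separated_against_def
proof (intro allI impI)
  fix S hN hA kN kA
  assume d: "nn_dense Y S" and h: "lhom Y G hN hA" and k: "lhom Y G kN kA"
    and aN: "\<forall>x\<in>fst S. hN x = kN x" and aA: "\<forall>e\<in>snd S. hA e = kA e"
  have nN: "\<forall>x\<in>nodes Y. hN x = kN x" using aN dense_nodes[OF d] by blast
  have "subgraph Y (nn_closure Y S)" unfolding nn_closure_def by (rule sub_neg_sub)
  moreover have c: "nn_closure Y S = (nodes Y, arcs Y)" using d unfolding nn_dense_def by (rule conjunct2)
  ultimately have "subgraph Y (nodes Y, arcs Y)" by (simp only:)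
  then have sY: "\<forall>e\<in>arcs Y. src Y e \<in> nodes Y \<and> tgt Y e \<in> nodes Y"
    by (simp add: subgraph_def)
  have "\<forall>e\<in>arcs Y. hA e = kA e"
  proof
    fix e assume e: "e \<in> arcs Y"
    have 1: "hA e \<in> arcs G" "kA e \<in> arcs G" using h k e by (simp_all add: lhom_def)
    have 2: "src G (hA e) = src G (kA e)" using h k e sY nN by (simp add: lhom_def)
    have 3: "tgt G (hA e) = tgt G (kA e)" using h k e sY nN by (simp add: lhom_def)
    have 4: "lab G (hA e) = lab G (kA e)" using h k e by (simp add: lhom_def)
    show "hA e = kA e" using assms 1 2 3 4 unfolding transition_system_def by blast
  qed
  with nN show "(\<forall>x\<in>nodes Y. hN x = kN x) \<and> (\<forall>e\<in>arcs Y. hA e = kA e)" by blast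
qed

lemma bwd:
  fixes \<Sigma> :: "'s set" and G :: "('n, 'a, 's) lgraph"
  assumes "wf_lgraph \<Sigma> G"
    and "\<forall>Y :: ('n + 'c, 'a + 'd, 's) lgraph. wf_lgraph \<Sigma> Y \<longrightarrow> separated_against Y G"
  shows "transition_system G"
  unfolding transition_system_def
proof (intro ballI impI)
  fix e1 e2 assume e1: "e1 \<in> arcs G" and e2: "e2 \<in> arcs G"
    and eq: "src G e1 = src G e2 \<and> tgt G e1 = tgt G e2 \<and> lab G e1 = lab G e2"
  define Y :: "('n + 'c, 'a + 'd, 's) lgraph" where
    "Y = \<lparr>nodes = Inl ` {src G e1, tgt G e1}, arcs = {Inl e1},
          src = case_sum (\<lambda>a. Inl (src G a)) (\<lambda>_. undefined),
          tgt = case_sum (\<lambda>a. Inl (tgt G a)) (\<lambda>_. undefined),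
          lab = case_sum (lab G) (\<lambda>_. undefined)\<rparr>"
  have wf: "wf_lgraph \<Sigma> Y" using assms(1) e1 unfolding Y_def wf_lgraph_def by simp
  have s1: "subgraph Y (nodes Y, {})" unfolding subgraph_def by simp
  have s2: "subgraph Y (nodes Y, arcs Y)" unfolding subgraph_def Y_def by simp
  have n1: "sub_neg Y (nodes Y, {}) = ({}, {})" by (rule neg_full) simp
  have n2: "sub_neg Y ({}, {}) = (nodes Y, arcs Y)" by (rule neg_empty[OF s2]) simp_all
  have d: "nn_dense Y (nodes Y, {})"
    unfolding nn_dense_def nn_closure_def n1 n2 using s1 by simp
  define hN :: "'n + 'c \<Rightarrow> 'n" where "hN = case_sum id (\<lambda>_. undefined)"
  have h: "lhom Y G hN (\<lambda>_. e1)" using assms(1) e1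
    unfolding lhom_def Y_def hN_def wf_lgraph_def by simp
  have k: "lhom Y G hN (\<lambda>_. e2)" using assms(1) e1 e2 eq
    unfolding lhom_def Y_def hN_def wf_lgraph_def by simp
  have sepY: "separated_against Y G" using assms(2) wf by blast
  have "\<forall>e\<in>arcs Y. e1 = e2"
    using sepY[unfolded separated_against_def, rule_format, OF d h k] by simp
  then show "e1 = e2" unfolding Y_def by simp
qed

theorem theorem5:
  fixes \<Sigma> :: "'s set" and G :: "('n, 'a, 's) lgraph"
  assumes "wf_lgraph \<Sigma> G"
  shows "transition_system G \<longleftrightarrow>
    (\<forall>Y :: ('n + 'c, 'a + 'd, 's) lgraph. wf_lgraph \<Sigma> Y \<longrightarrow> separated_against Y G)"
  using fwd[of G] bwd[OF assms, where 'c='c and 'd='d] by blast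

end
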